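(* Let $\rho$ be a positive semidefinite operator on $h$ with $\mathrm{tr}\,\rho>0$, and let $\rho_0$ denote $\rho$ acting on slice $0$. Let $\mathcal H_E$ be an "environment" Hilbert space isomorphic to $\mathcal H$, with $\mathbb 1_E$ its identity. Let $|\Phi^+\rangle=\sum_{\mathbf i}|\mathbf i\rangle|\mathbf i\rangle_E$ be the unnormalized maximally entangled vector, where $\mathbf i=(i_0,\dots,i_{N-1})$ runs over the product basis. Define $$|\Psi\rangle:=\big(\rho_0e^{i\tilde{\mathcal S}/2}\otimes\mathbb 1_E\big)|\Phi^+\rangle,\qquad |\overline\Psi\rangle:=\big(e^{i\tilde{\mathcal S}/2}\otimes\mathbb 1_E\big)^\dagger|\Phi^+\rangle,\qquad R:=\frac{|\Psi\rangle\langle\overline\Psi|}{\langle\overline\Psi|\Psi\rangle}.$$ Then $R$ is well defined and satisfies $R^2=R$ and $\mathrm{Tr}\,R=1$ (trace on $\mathcal H\otimes\mathcal H_E$). Moreover, $$\mathrm{Tr}_E[R]=\frac{\rho_0e^{i\tilde{\mathcal S}}}{\mathrm{tr}[\rho]},$$ and for every $t\in\{0,\dots,N-1\}$, the partial trace of $R$ over $\mathcal H_E$ and over all slices $t'\neq t$ equals $$\frac{\rho(t)}{\mathrm{tr}[\rho]},\qquad \rho(t)=e^{-i\epsilon tH}\rho\,e^{i\epsilon tH}.$$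
   Context: Bosonic-like setting. Fix integers $d\ge1$, $N\ge1$, a real $\epsilon>0$, and set $T=\epsilon N$. Let $h$ be a $d$-dimensional Hilbert space with orthonormal basis $\{|i\rangle\}_{i=1}^d$ and trace $\mathrm{tr}$. The space $\mathcal H$. Let $\mathcal H=h^{\otimes N}$, with factors labelled by time slices $t=0,\dots,N-1$, and trace $\mathrm{Tr}$. For an operator $A$ on $h$, $A_t$ denotes $A$ acting on factor $t$ tensored with identities elsewhere. Time translation. Let $C$ be the cyclic shift $C|i_0i_1\dots i_{N-1}\rangle=|i_{N-1}i_0\dots i_{N-2}\rangle$. Fix a hermitian operator $\mathcal P$ on $\mathcal H$ with $e^{i\epsilon\mathcal P}=C$. Quantum action. Let $H$ be a hermitian operator (Hamiltonian) on $h$. Define $$e^{i\mathcal S}:=C\prod_{t=0}^{N-1}e^{-i\epsilon H_t},\qquad \mathcal V:=\prod_{t}e^{i\epsilon tH_t},$$ $$e^{i\tilde{\mathcal S}}:=e^{iTH_0}e^{i\mathcal S}\ \big(=\mathcal V^\dagger C\mathcal V\big),\qquad e^{i\tilde{\mathcal S}/2}:=\mathcal V^\dagger e^{i\epsilon\mathcal P/2}\mathcal V.$$ *)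

theory Defs
  imports Complex_Main "HOL-Library.Complex_Order"
begin

text \<open>Operators on a finite-dimensional Hilbert space with orthonormal basis indexed
by a finite set I are represented by their matrix kernels  'a => 'a => complex
(A x y = <x|A|y>); all operations only look at entries indexed by I.\<close>

type_synonym 'a kernel = "'a \<Rightarrow> 'a \<Rightarrow> complex"

definition kmult :: "'a set \<Rightarrow> 'a kernel \<Rightarrow> 'a kernel \<Rightarrow> 'a kernel" where
  "kmult I A B = (\<lambda>x y. \<Sum>z\<in>I. A x z * B z y)"

definition kid :: "'a kernel" where
  "kid = (\<lambda>x y. if x = y then 1 else 0)"

definition kadj :: "'a kernel \<Rightarrow> 'a kernel" where
  "kadj A = (\<lambda>x y. cnj (A y x))"

definition kscale :: "complex \<Rightarrow> 'a kernel \<Rightarrow> 'a kernel" where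
  "kscale c A = (\<lambda>x y. c * A x y)"

fun kpow :: "'a set \<Rightarrow> 'a kernel \<Rightarrow> nat \<Rightarrow> 'a kernel" where
  "kpow I A 0 = kid"
| "kpow I A (Suc n) = kmult I A (kpow I A n)"

definition kexp :: "'a set \<Rightarrow> 'a kernel \<Rightarrow> 'a kernel" where
  "kexp I A = (\<lambda>x y. \<Sum>n. kpow I A n x y / fact n)"

definition ktrace :: "'a set \<Rightarrow> 'a kernel \<Rightarrow> complex" where
  "ktrace I A = (\<Sum>x\<in>I. A x x)"

definition hermitian_on :: "'a set \<Rightarrow> 'a kernel \<Rightarrow> bool" where
  "hermitian_on I A \<longleftrightarrow> (\<forall>x\<in>I. \<forall>y\<in>I. A x y = cnj (A y x))"

definition psd_on :: "'a set \<Rightarrow> 'a kernel \<Rightarrow> bool" where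
  "psd_on I A \<longleftrightarrow> hermitian_on I A \<and>
     (\<forall>v :: 'a \<Rightarrow> complex. 0 \<le> (\<Sum>x\<in>I. \<Sum>y\<in>I. cnj (v x) * A x y * v y))"

text \<open>The single-slice space h has basis {..<d}; H = h^(tensor N) has the product
basis |i_0 ... i_(N-1)>, indexed by lists of length N with entries < d.\<close>

definition slices :: "nat \<Rightarrow> nat \<Rightarrow> nat list set" where
  "slices d N = {xs. length xs = N \<and> (\<forall>i\<in>set xs. i < d)}"

definition site_op :: "nat \<Rightarrow> nat \<Rightarrow> nat kernel \<Rightarrow> nat list kernel" where
  "site_op N t A = (\<lambda>xs ys. A (xs ! t) (ys ! t) *
      (if \<forall>s<N. s \<noteq> t \<longrightarrow> xs ! s = ys ! s then 1 else 0))"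

definition kprod :: "'a set \<Rightarrow> 'a kernel list \<Rightarrow> 'a kernel" where
  "kprod I As = foldr (kmult I) As kid"

text \<open>Cyclic shift C |i_0 i_1 ... i_(N-1)> = |i_(N-1) i_0 ... i_(N-2)>.\<close>
definition shiftC :: "nat list kernel" where
  "shiftC = (\<lambda>xs ys. if ys \<noteq> [] \<and> xs = last ys # butlast ys then 1 else 0)"

definition eiS :: "nat \<Rightarrow> nat \<Rightarrow> real \<Rightarrow> nat kernel \<Rightarrow> nat list kernel" where
  "eiS d N \<epsilon> H = kmult (slices d N) shiftC
     (kprod (slices d N)
        (map (\<lambda>t. site_op N t (kexp {..<d} (kscale (- \<i> * of_real \<epsilon>) H))) [0..<N]))"

definition Vop :: "nat \<Rightarrow> nat \<Rightarrow> real \<Rightarrow> nat kernel \<Rightarrow> nat list kernel" where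
  "Vop d N \<epsilon> H = kprod (slices d N)
        (map (\<lambda>t. site_op N t (kexp {..<d} (kscale (\<i> * of_real \<epsilon> * of_nat t) H))) [0..<N])"

definition eiStilde :: "nat \<Rightarrow> nat \<Rightarrow> real \<Rightarrow> nat kernel \<Rightarrow> nat list kernel" where
  "eiStilde d N \<epsilon> H = kmult (slices d N)
     (site_op N 0 (kexp {..<d} (kscale (\<i> * of_real (\<epsilon> * real N)) H))) (eiS d N \<epsilon> H)"

definition eiStilde_half :: "nat \<Rightarrow> nat \<Rightarrow> real \<Rightarrow> nat kernel \<Rightarrow> nat list kernel \<Rightarrow> nat list kernel" where
  "eiStilde_half d N \<epsilon> H P = kmult (slices d N) (kadj (Vop d N \<epsilon> H))
     (kmult (slices d N) (kexp (slices d N) (kscale (\<i> * of_real \<epsilon> / 2) P)) (Vop d N \<epsilon> H))"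

text \<open>Joint space H (x) H_E with H_E a copy of H: basis indexed by pairs.\<close>

definition tensor_idE :: "'a kernel \<Rightarrow> ('a \<times> 'a) kernel" where
  "tensor_idE A = (\<lambda>(x, e) (y, f). A x y * kid e f)"

definition kapply :: "'b set \<Rightarrow> 'b kernel \<Rightarrow> ('b \<Rightarrow> complex) \<Rightarrow> 'b \<Rightarrow> complex" where
  "kapply J M v = (\<lambda>p. \<Sum>q\<in>J. M p q * v q)"

definition vinner :: "'b set \<Rightarrow> ('b \<Rightarrow> complex) \<Rightarrow> ('b \<Rightarrow> complex) \<Rightarrow> complex" where
  "vinner J u v = (\<Sum>p\<in>J. cnj (u p) * v p)"

definition PhiPlus :: "'a \<times> 'a \<Rightarrow> complex" where
  "PhiPlus = (\<lambda>(x, e). if x = e then 1 else 0)"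

definition Psi :: "nat \<Rightarrow> nat \<Rightarrow> real \<Rightarrow> nat kernel \<Rightarrow> nat list kernel \<Rightarrow> nat kernel \<Rightarrow> nat list \<times> nat list \<Rightarrow> complex" where
  "Psi d N \<epsilon> H P \<rho> = kapply (slices d N \<times> slices d N)
     (tensor_idE (kmult (slices d N) (site_op N 0 \<rho>) (eiStilde_half d N \<epsilon> H P))) PhiPlus"

definition Psibar :: "nat \<Rightarrow> nat \<Rightarrow> real \<Rightarrow> nat kernel \<Rightarrow> nat list kernel \<Rightarrow> nat list \<times> nat list \<Rightarrow> complex" where
  "Psibar d N \<epsilon> H P = kapply (slices d N \<times> slices d N)
     (kadj (tensor_idE (eiStilde_half d N \<epsilon> H P))) PhiPlus"

definition Rop :: "nat \<Rightarrow> nat \<Rightarrow> real \<Rightarrow> nat kernel \<Rightarrow> nat list kernel \<Rightarrow> nat kernel \<Rightarrow> (nat list \<times> nat list) kernel" where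
  "Rop d N \<epsilon> H P \<rho> = (\<lambda>p q. Psi d N \<epsilon> H P \<rho> p * cnj (Psibar d N \<epsilon> H P q) /
       vinner (slices d N \<times> slices d N) (Psibar d N \<epsilon> H P) (Psi d N \<epsilon> H P \<rho>))"

definition ptrace_E :: "'a set \<Rightarrow> ('a \<times> 'a) kernel \<Rightarrow> 'a kernel" where
  "ptrace_E I R = (\<lambda>x y. \<Sum>e\<in>I. R (x, e) (y, e))"

definition ptrace_except :: "nat \<Rightarrow> nat \<Rightarrow> nat \<Rightarrow> nat list kernel \<Rightarrow> nat kernel" where
  "ptrace_except d N t M = (\<lambda>a b. \<Sum>xs\<in>{xs \<in> slices d N. xs ! t = a}. M xs (xs[t := b]))"

end

theory Submission
  imports Defs
begin


lemma kmult_cong: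
  assumes "\<And>z. z \<in> I \<Longrightarrow> A x z = A' x z" "\<And>z. z \<in> I \<Longrightarrow> B z y = B' z y"
  shows "kmult I A B x y = kmult I A' B' x y"
  unfolding kmult_def using assms by (intro sum.cong) auto

lemma kmult_assoc: "kmult I (kmult I A B) C = kmult I A (kmult I B C)"
proof (intro ext)
  fix x y
  have "(\<Sum>z\<in>I. (\<Sum>w\<in>I. A x w * B w z) * C z y) = (\<Sum>z\<in>I. \<Sum>w\<in>I. A x w * (B w z * C z y))"
    by (simp add: sum_distrib_right mult.assoc)
  also have "\<dots> = (\<Sum>w\<in>I. \<Sum>z\<in>I. A x w * (B w z * C z y))" by (rule sum.swap)
  also have "\<dots> = (\<Sum>w\<in>I. A x w * (\<Sum>z\<in>I. B w z * C z y))" by (simp add: sum_distrib_left)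
  finally show "kmult I (kmult I A B) C x y = kmult I A (kmult I B C) x y" by (simp add: kmult_def)
qed

lemma kmult_kid_left: "finite I \<Longrightarrow> x \<in> I \<Longrightarrow> kmult I kid A x y = A x y"
proof -
  assume "finite I" "x \<in> I"
  have "kmult I kid A x y = (\<Sum>z\<in>I. if x = z then A z y else 0)"
    unfolding kmult_def kid_def by (intro sum.cong) auto
  then show ?thesis using \<open>finite I\<close> \<open>x \<in> I\<close> by simp
qed

lemma kmult_kid_right: "finite I \<Longrightarrow> y \<in> I \<Longrightarrow> kmult I A kid x y = A x y"
  unfolding kmult_def kid_def by (simp add: if_distrib cong: if_cong)

lemma kpow_scale: "kpow I (kscale c A) n = kscale (c^n) (kpow I A n)"
  by (induction n) (auto simp: kscale_def kmult_def sum_distrib_left mult_ac intro!: ext)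

lemma kpow_add: "finite I \<Longrightarrow> x \<in> I \<Longrightarrow> kmult I (kpow I A m) (kpow I A n) x y = kpow I A (m+n) x y"
proof (induction m arbitrary: x)
  case 0 then show ?case by (simp add: kmult_kid_left)
next
  case (Suc m)
  have "kmult I (kpow I A (Suc m)) (kpow I A n) x y = kmult I A (kmult I (kpow I A m) (kpow I A n)) x y"
    by (simp add: kmult_assoc)
  also have "\<dots> = kmult I A (kpow I A (m+n)) x y"
    using Suc by (intro kmult_cong) auto
  finally show ?case by simp
qed

lemma kpow_bound:
  assumes fin: "finite I" and x: "x \<in> I" and y: "y \<in> I"
  shows "norm (kpow I A n x y) \<le> (1 + (\<Sum>u\<in>I. \<Sum>v\<in>I. norm (A u v))) ^ n"
  using x
proof (induction n arbitrary: x)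
  case 0 then show ?case by (simp add: kid_def)
next
  case (Suc n)
  let ?K = "1 + (\<Sum>u\<in>I. \<Sum>v\<in>I. norm (A u v))"
  have "norm (kpow I A (Suc n) x y) \<le> (\<Sum>z\<in>I. norm (A x z) * norm (kpow I A n z y))"
    by (simp add: kmult_def norm_mult[symmetric] sum_norm_le)
  also have "\<dots> \<le> (\<Sum>z\<in>I. norm (A x z) * ?K ^ n)"
    using Suc by (intro sum_mono mult_left_mono) auto
  also have "\<dots> = (\<Sum>z\<in>I. norm (A x z)) * ?K ^ n" by (simp add: sum_distrib_right)
  also have "\<dots> \<le> ?K * ?K ^ n"
  proof (rule mult_right_mono)
    have "(\<Sum>z\<in>I. norm (A x z)) \<le> (\<Sum>u\<in>I. \<Sum>v\<in>I. norm (A u v))"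
    proof -
      have "(\<lambda>u. \<Sum>v\<in>I. norm (A u v)) x \<le> sum (\<lambda>u. \<Sum>v\<in>I. norm (A u v)) I"
        by (rule member_le_sum) (use Suc.prems fin in \<open>auto intro: sum_nonneg\<close>)
      then show ?thesis by simp
    qed
    then show "(\<Sum>z\<in>I. norm (A x z)) \<le> ?K" by simp
    show "0 \<le> ?K ^ n" by (intro zero_le_power add_nonneg_nonneg sum_nonneg) auto
  qed
  finally show ?case by simp
qed

definition eterm :: "'a set \<Rightarrow> 'a kernel \<Rightarrow> complex \<Rightarrow> 'a \<Rightarrow> 'a \<Rightarrow> nat \<Rightarrow> complex" where
  "eterm I A c x y n = c ^ n * kpow I A n x y / fact n"

lemma kexp_scale: "kexp I (kscale c A) x y = (\<Sum>n. eterm I A c x y n)"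
  unfolding kexp_def kpow_scale by (simp add: kscale_def eterm_def)

lemma eterm_summable:
  assumes fin: "finite I" and x: "x \<in> I" and y: "y \<in> I"
  shows "summable (\<lambda>n. norm (eterm I A c x y n))"
proof -
  let ?K = "1 + (\<Sum>u\<in>I. \<Sum>v\<in>I. norm (A u v))"
  have "summable (\<lambda>n. inverse (fact n) * (norm c * ?K) ^ n)" by (rule summable_exp)
  then show ?thesis
  proof (rule summable_comparison_test[rotated], intro exI allI impI)
    fix n
    have "norm (eterm I A c x y n) = norm c ^ n * norm (kpow I A n x y) / fact n"
      by (simp add: eterm_def norm_mult norm_divide norm_power)
    also have "\<dots> \<le> norm c ^ n * ?K ^ n / fact n"
      by (intro divide_right_mono mult_left_mono kpow_bound fin x y) auto
    also have "\<dots> = inverse (fact n) * (norm c * ?K) ^ n"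
      by (simp add: power_mult_distrib divide_inverse mult_ac)
    finally show "norm (norm (eterm I A c x y n)) \<le> inverse (fact n) * (norm c * ?K) ^ n" by simp
  qed
qed

lemma kexp_zero:
  assumes "finite I" "x \<in> I"
  shows "kexp I (kscale 0 A) x y = kid x y"
proof -
  have "(\<lambda>n. eterm I A 0 x y n) = (\<lambda>n. if n = 0 then kid x y else 0)"
    by (auto simp: eterm_def intro!: ext)
  moreover have "(\<lambda>n. if n = 0 then kid x y else 0) sums kid x y"
    using sums_single[of 0 "\<lambda>_. kid x y"] by simp
  ultimately show ?thesis by (simp add: kexp_scale sums_iff)
qed

lemma kexp_add:
  assumes fin: "finite I" and x: "x \<in> I" and y: "y \<in> I"
  shows "kmult I (kexp I (kscale a A)) (kexp I (kscale b A)) x y = kexp I (kscale (a+b) A) x y"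
proof -
  have cp: "(\<lambda>k. \<Sum>i\<le>k. eterm I A a x z i * eterm I A b z y (k - i)) sums
      (kexp I (kscale a A) x z * kexp I (kscale b A) z y)" if z: "z \<in> I" for z
    unfolding kexp_scale
    by (rule Cauchy_product_sums; rule eterm_summable) (use fin x y z in auto)
  have "(\<lambda>k. \<Sum>z\<in>I. \<Sum>i\<le>k. eterm I A a x z i * eterm I A b z y (k - i)) sums
       kmult I (kexp I (kscale a A)) (kexp I (kscale b A)) x y"
    unfolding kmult_def by (rule sums_sum) (use cp in auto)
  moreover have "(\<Sum>z\<in>I. \<Sum>i\<le>k. eterm I A a x z i * eterm I A b z y (k - i)) = eterm I A (a+b) x y k" for k
  proof -
    have "(\<Sum>z\<in>I. \<Sum>i\<le>k. eterm I A a x z i * eterm I A b z y (k - i))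
       = (\<Sum>i\<le>k. a ^ i * b ^ (k - i) / (fact i * fact (k - i)) * (\<Sum>z\<in>I. kpow I A i x z * kpow I A (k-i) z y))"
      by (subst sum.swap) (simp add: eterm_def sum_distrib_left mult_ac)
    also have "\<dots> = (\<Sum>i\<le>k. a ^ i * b ^ (k - i) / (fact i * fact (k - i)) * kpow I A k x y)"
      by (intro sum.cong refl) (use kpow_add[OF fin x] in \<open>auto simp: kmult_def\<close>)
    also have "\<dots> = (\<Sum>i\<le>k. of_nat (k choose i) * a ^ i * b ^ (k - i) * kpow I A k x y / fact k)"
    proof (intro sum.cong refl)
      fix i assume "i \<in> {..k}"
      then have "i \<le> k" by simp
      then show "a ^ i * b ^ (k - i) / (fact i * fact (k - i)) * kpow I A k x y =
          of_nat (k choose i) * a ^ i * b ^ (k - i) * kpow I A k x y / fact k"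
        by (simp add: binomial_fact)
    qed
    also have "\<dots> = (\<Sum>i\<le>k. of_nat (k choose i) * a ^ i * b ^ (k - i)) * kpow I A k x y / fact k"
      by (simp add: sum_distrib_right sum_divide_distrib)
    also have "\<dots> = eterm I A (a+b) x y k"
      by (simp add: eterm_def binomial_ring)
    finally show ?thesis .
  qed
  ultimately show ?thesis by (simp add: kexp_scale sums_iff)
qed

lemma kpow_herm:
  assumes fin: "finite I" and h: "hermitian_on I A" and x: "x \<in> I" and y: "y \<in> I"
  shows "cnj (kpow I A n y x) = kpow I A n x y"
  using x y
proof (induction n arbitrary: x y)
  case 0 then show ?case by (simp add: kid_def)
next
  case (Suc n)
  have "cnj (kpow I A (Suc n) y x) = (\<Sum>z\<in>I. cnj (A y z) * cnj (kpow I A n z x))"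
    by (simp add: kmult_def)
  also have "\<dots> = (\<Sum>z\<in>I. kpow I A n x z * A z y)"
  proof (intro sum.cong refl)
    fix z assume z: "z \<in> I"
    have "A z y = cnj (A y z)" using h z Suc.prems unfolding hermitian_on_def by blast
    moreover have "cnj (kpow I A n z x) = kpow I A n x z" using Suc.IH[of x z] z Suc.prems by blast
    ultimately show "cnj (A y z) * cnj (kpow I A n z x) = kpow I A n x z * A z y" by simp
  qed
  also have "\<dots> = kmult I (kpow I A n) (kpow I A 1) x y"
    unfolding kmult_def using Suc.prems fin by (intro sum.cong) (auto simp: kmult_kid_right)
  also have "\<dots> = kpow I A (Suc n) x y" using kpow_add[OF fin Suc.prems(1), of A n 1] by (simp del: kpow.simps)
  finally show ?case .
qed

lemma kexp_adj:
  assumes fin: "finite I" and h: "hermitian_on I A" and x: "x \<in> I" and y: "y \<in> I"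
  shows "kadj (kexp I (kscale c A)) x y = kexp I (kscale (cnj c) A) x y"
proof -
  have "(\<lambda>n. eterm I A c y x n) sums kexp I (kscale c A) y x"
    unfolding kexp_scale using eterm_summable[OF fin y x] summable_norm_cancel by (auto simp: summable_sums)
  then have "(\<lambda>n. cnj (eterm I A c y x n)) sums cnj (kexp I (kscale c A) y x)"
    by (simp add: sums_cnj)
  moreover have "cnj (eterm I A c y x n) = eterm I A (cnj c) x y n" for n
    using kpow_herm[OF fin h x y] by (simp add: eterm_def)
  ultimately show ?thesis by (simp add: kadj_def kexp_scale sums_iff)
qed



definition tens :: "nat \<Rightarrow> (nat \<Rightarrow> nat kernel) \<Rightarrow> nat list kernel" where
  "tens N B = (\<lambda>xs ys. \<Prod>t<N. B t (xs!t) (ys!t))"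

lemma slices_0: "slices d 0 = {[]}"
  by (auto simp: slices_def)

lemma slices_Suc: "slices d (Suc N) = (\<lambda>(c,xs). c#xs) ` ({..<d} \<times> slices d N)"
  by (auto simp: slices_def length_Suc_conv image_iff)

lemma finite_slices: "finite (slices d N)"
  by (induction N) (auto simp: slices_0 slices_Suc)

lemma slices_length: "xs \<in> slices d N \<Longrightarrow> length xs = N"
  by (simp add: slices_def)

lemma slices_nth: "xs \<in> slices d N \<Longrightarrow> t < N \<Longrightarrow> xs ! t < d"
  by (auto simp: slices_def)

lemma slices_update: "xs \<in> slices d N \<Longrightarrow> b < d \<Longrightarrow> xs[t := b] \<in> slices d N"
  by (auto simp: slices_def dest: set_update_subset_insert[THEN subsetD])

lemma sum_slices_prod:
  "(\<Sum>xs\<in>slices d N. \<Prod>t<N. g t (xs!t)) = (\<Prod>t<N. \<Sum>c<d. g t c :: complex)"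
proof (induction N arbitrary: g)
  case 0 then show ?case by (simp add: slices_0)
next
  case (Suc N)
  have inj: "inj_on (\<lambda>(c,xs). c#xs) ({..<d} \<times> slices d N)"
    by (auto simp: inj_on_def)
  have "(\<Sum>xs\<in>slices d (Suc N). \<Prod>t<Suc N. g t (xs!t))
      = (\<Sum>p\<in>{..<d} \<times> slices d N. \<Prod>t<Suc N. g t ((fst p # snd p)!t))"
    unfolding slices_Suc by (subst sum.reindex[OF inj]) (auto intro!: sum.cong)
  also have "\<dots> = (\<Sum>p\<in>{..<d} \<times> slices d N. g 0 (fst p) * (\<Prod>t<N. g (Suc t) (snd p ! t)))"
    by (intro sum.cong refl) (simp del: prod.lessThan_Suc add: prod.lessThan_Suc_shift)
  also have "\<dots> = (\<Sum>c<d. g 0 c) * (\<Sum>xs\<in>slices d N. \<Prod>t<N. g (Suc t) (xs ! t))"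
    by (simp add: sum.cartesian_product case_prod_beta sum_product)
  also have "\<dots> = (\<Sum>c<d. g 0 c) * (\<Prod>t<N. \<Sum>c<d. g (Suc t) c)"
    using Suc.IH[of "\<lambda>t. g (Suc t)"] by simp
  also have "\<dots> = (\<Prod>t<Suc N. \<Sum>c<d. g t c)"
    by (simp only: prod.lessThan_Suc_shift)
  finally show ?case .
qed

lemma kmult_tens:
  "kmult (slices d N) (tens N A) (tens N B) xs ys = tens N (\<lambda>t. kmult {..<d} (A t) (B t)) xs ys"
proof -
  have "kmult (slices d N) (tens N A) (tens N B) xs ys
      = (\<Sum>zs\<in>slices d N. \<Prod>t<N. A t (xs!t) (zs!t) * B t (zs!t) (ys!t))"
    by (simp add: kmult_def tens_def prod.distrib)
  also have "\<dots> = tens N (\<lambda>t. kmult {..<d} (A t) (B t)) xs ys"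
    by (subst sum_slices_prod[where g = "\<lambda>t c. A t (xs!t) c * B t c (ys!t)"]) (simp add: tens_def kmult_def)
  finally show ?thesis .
qed

lemma kadj_tens: "kadj (tens N A) = tens N (\<lambda>t. kadj (A t))"
  by (simp add: kadj_def tens_def)

lemma prod01: "finite T \<Longrightarrow> (\<Prod>t\<in>T. if P t then 1 else 0 :: complex) = (if \<forall>t\<in>T. P t then 1 else 0)"
proof (cases "\<forall>t\<in>T. P t")
  case True then show ?thesis by simp
next
  case False
  assume "finite T"
  then obtain t where "t \<in> T" "\<not> P t" using False by blast
  then show ?thesis using False \<open>finite T\<close> by (subst prod_zero) auto
qed

lemma tens_kid:
  assumes "xs \<in> slices d N" "ys \<in> slices d N"
  shows "tens N (\<lambda>_. kid) xs ys = kid xs ys"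
proof -
  have "tens N (\<lambda>_. kid) xs ys = (if \<forall>t\<in>{..<N}. xs!t = ys!t then 1 else 0)"
    unfolding tens_def kid_def by (rule prod01) simp
  also have "\<dots> = kid xs ys"
    using assms by (auto simp: kid_def slices_length list_eq_iff_nth_eq)
  finally show ?thesis .
qed

lemma site_op_tens:
  assumes "t < N"
  shows "site_op N t A xs ys = tens N (\<lambda>s. if s = t then A else kid) xs ys"
proof -
  have "tens N (\<lambda>s. if s = t then A else kid) xs ys
      = A (xs!t) (ys!t) * (\<Prod>s\<in>{..<N} - {t}. if xs!s = ys!s then 1 else 0)"
    unfolding tens_def using assms
    by (subst prod.remove[of _ t]) (auto simp: kid_def intro!: prod.cong)
  also have "\<dots> = site_op N t A xs ys"
    by (subst prod01) (auto simp: site_op_def)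
  finally show ?thesis by simp
qed

lemma tens_cong:
  assumes "\<And>t a b. t < N \<Longrightarrow> a < d \<Longrightarrow> b < d \<Longrightarrow> B t a b = B' t a b"
    and "xs \<in> slices d N" "ys \<in> slices d N"
  shows "tens N B xs ys = tens N B' xs ys"
  unfolding tens_def using assms slices_nth by (intro prod.cong) auto

lemma kprod_Cons: "kprod I (A # As) = kmult I A (kprod I As)"
  by (simp add: kprod_def)

lemma kprod_tens:
  assumes "\<And>t xs ys. t \<in> set ts \<Longrightarrow> xs \<in> slices d N \<Longrightarrow> ys \<in> slices d N \<Longrightarrow> f t xs ys = tens N (B t) xs ys"
    and "xs \<in> slices d N" "ys \<in> slices d N"
  shows "kprod (slices d N) (map f ts) xs ys = tens N (\<lambda>s. kprod {..<d} (map (\<lambda>t. B t s) ts)) xs ys"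
  using assms
proof (induction ts arbitrary: xs ys)
  case Nil
  then show ?case using tens_kid[of xs d N ys] by (simp add: kprod_def)
next
  case (Cons t ts)
  have "kprod (slices d N) (map f (t # ts)) xs ys
      = kmult (slices d N) (tens N (B t)) (tens N (\<lambda>s. kprod {..<d} (map (\<lambda>t. B t s) ts))) xs ys"
    unfolding list.map kprod_Cons using Cons by (intro kmult_cong) auto
  also have "\<dots> = tens N (\<lambda>s. kprod {..<d} (map (\<lambda>t. B t s) (t # ts))) xs ys"
    by (simp add: kmult_tens kprod_Cons)
  finally show ?case .
qed

lemma kprod_site:
  fixes d :: nat
  assumes "a < d" "b < d" "distinct ts"
  shows "kprod {..<d} (map (\<lambda>t. if s = t then F t else kid) ts) a b = (if s \<in> set ts then F s a b else kid a b)"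
  using assms
proof (induction ts arbitrary: a b)
  case Nil then show ?case by (simp add: kprod_def)
next
  case (Cons t ts)
  show ?case
  proof (cases "s = t")
    case True
    then have "s \<notin> set ts" using Cons by auto
    have "kprod {..<d} (map (\<lambda>t. if s = t then F t else kid) (t # ts)) a b
        = kmult {..<d} (F s) kid a b"
      unfolding list.map kprod_Cons using Cons \<open>s \<notin> set ts\<close> True by (intro kmult_cong) auto
    also have "\<dots> = F s a b" by (rule kmult_kid_right) (use Cons.prems in auto)
    finally show ?thesis using True by simp
  next
    case False
    have "kprod {..<d} (map (\<lambda>t. if s = t then F t else kid) (t # ts)) a b
        = kmult {..<d} kid (kprod {..<d} (map (\<lambda>t. if s = t then F t else kid) ts)) a b"
      using False by (simp add: kprod_Cons)
    also have "\<dots> = kprod {..<d} (map (\<lambda>t. if s = t then F t else kid) ts) a b"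
      using Cons by (simp add: kmult_kid_left)
    finally show ?thesis using Cons False by simp
  qed
qed

lemma kprod_sites:
  assumes "xs \<in> slices d N" "ys \<in> slices d N"
  shows "kprod (slices d N) (map (\<lambda>t. site_op N t (F t)) [0..<N]) xs ys = tens N F xs ys"
proof -
  have "kprod (slices d N) (map (\<lambda>t. site_op N t (F t)) [0..<N]) xs ys
      = tens N (\<lambda>s. kprod {..<d} (map (\<lambda>t. if s = t then F t else kid) [0..<N])) xs ys"
    by (rule kprod_tens[where B = "\<lambda>t s. if s = t then F t else kid"])
       (use assms in \<open>auto simp: site_op_tens\<close>)
  also have "\<dots> = tens N F xs ys"
    by (rule tens_cong) (use assms in \<open>auto simp: kprod_site\<close>)
  finally show ?thesis .
qed

lemma shiftC_iff:
  assumes "xs \<noteq> []"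
  shows "(zs \<noteq> [] \<and> xs = last zs # butlast zs) \<longleftrightarrow> zs = rotate1 xs"
proof
  assume "zs \<noteq> [] \<and> xs = last zs # butlast zs"
  then show "zs = rotate1 xs" by simp
next
  assume "zs = rotate1 xs"
  then show "zs \<noteq> [] \<and> xs = last zs # butlast zs"
    using assms by (cases xs) auto
qed

lemma rotate1_slices: "xs \<in> slices d N \<Longrightarrow> rotate1 xs \<in> slices d N"
  by (simp add: slices_def)

lemma kmult_shift_left:
  assumes "N \<ge> 1" "xs \<in> slices d N"
  shows "kmult (slices d N) shiftC K xs ys = K (rotate1 xs) ys"
proof -
  have ne: "xs \<noteq> []" using assms slices_length by fastforce
  have "kmult (slices d N) shiftC K xs ys = (\<Sum>zs\<in>slices d N. if zs = rotate1 xs then K zs ys else 0)"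
    unfolding kmult_def shiftC_def using shiftC_iff[OF ne] by (intro sum.cong) auto
  also have "\<dots> = K (rotate1 xs) ys"
    using rotate1_slices[OF assms(2)] by (simp add: finite_slices)
  finally show ?thesis .
qed

lemma lbl_slices:
  assumes "N \<ge> 1" "ys \<in> slices d N"
  shows "last ys # butlast ys \<in> slices d N"
proof -
  have "ys \<noteq> []" using assms slices_length by fastforce
  then show ?thesis using assms by (auto simp: slices_def dest: in_set_butlastD)
qed

lemma kmult_shift_right:
  assumes "N \<ge> 1" "ys \<in> slices d N"
  shows "kmult (slices d N) K shiftC xs ys = K xs (last ys # butlast ys)"
proof -
  have ne: "ys \<noteq> []" using assms slices_length by fastforce
  have "kmult (slices d N) K shiftC xs ys = (\<Sum>zs\<in>slices d N. if zs = last ys # butlast ys then K xs zs else 0)"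
    unfolding kmult_def shiftC_def using ne by (intro sum.cong) auto
  also have "\<dots> = K xs (last ys # butlast ys)"
    using lbl_slices[OF assms] by (simp add: finite_slices)
  finally show ?thesis .
qed

lemma lbl_nth:
  assumes "length ys = N" "t < N"
  shows "(last ys # butlast ys) ! t = ys ! ((t + N - 1) mod N)"
proof (cases t)
  case 0
  then have "ys \<noteq> []" using assms by auto
  then show ?thesis using 0 assms by (simp add: last_conv_nth)
next
  case (Suc u)
  then have "(t + N - 1) mod N = u" using assms by simp
  then show ?thesis using Suc assms by (simp add: nth_butlast)
qed

lemma mod_aux1: "u < N \<Longrightarrow> (Suc u mod N + N - 1) mod N = u"
proof (cases "Suc u = N")
  case True then show ?thesis by simp
next
  case False
  assume "u < N"
  then have "Suc u < N" using False by simp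
  then have "Suc u mod N + N - 1 = u + N" by simp
  then show ?thesis using \<open>u < N\<close> by simp
qed

lemma mod_aux2: "t < N \<Longrightarrow> Suc ((t + N - 1) mod N) mod N = t"
proof (cases t)
  case 0
  assume "t < N"
  then show ?thesis using 0 by (cases N) auto
next
  case (Suc u)
  assume "t < N"
  then have "(t + N - 1) mod N = u" using Suc by simp
  then show ?thesis using Suc \<open>t < N\<close> by simp
qed

lemma shift_tens:
  assumes N: "N \<ge> 1" and xs: "xs \<in> slices d N" and ys: "ys \<in> slices d N"
  shows "kmult (slices d N) shiftC (tens N B) xs ys
       = kmult (slices d N) (tens N (\<lambda>s. B ((s + N - 1) mod N))) shiftC xs ys"
proof -
  have lx: "length xs = N" and ly: "length ys = N" using xs ys slices_length by auto
  have bij: "bij_betw (\<lambda>u. Suc u mod N) {..<N} {..<N}"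
    by (rule bij_betw_byWitness[where f' = "\<lambda>t. (t + N - 1) mod N"])
       (use N mod_aux1 mod_aux2 in auto)
  have "kmult (slices d N) shiftC (tens N B) xs ys = (\<Prod>u<N. B u (xs ! (Suc u mod N)) (ys ! u))"
    using kmult_shift_left[OF N xs] by (simp add: tens_def nth_rotate1 lx)
  also have "\<dots> = (\<Prod>u<N. (\<lambda>t. B ((t + N - 1) mod N) (xs!t) ((last ys # butlast ys) ! t)) (Suc u mod N))"
  proof (intro prod.cong refl)
    fix u assume "u \<in> {..<N}"
    then have u: "u < N" by simp
    have m: "(Suc u mod N + N - 1) mod N = u" using mod_aux1 u by blast
    have "Suc u mod N < N" using u by simp
    from lbl_nth[OF ly this] m
    show "B u (xs ! (Suc u mod N)) (ys ! u) = (\<lambda>t. B ((t + N - 1) mod N) (xs!t) ((last ys # butlast ys) ! t)) (Suc u mod N)"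
      by simp
  qed
  also have "\<dots> = (\<Prod>t<N. B ((t + N - 1) mod N) (xs!t) ((last ys # butlast ys) ! t))"
    by (rule prod.reindex_bij_betw[OF bij])
  also have "\<dots> = kmult (slices d N) (tens N (\<lambda>s. B ((s + N - 1) mod N))) shiftC xs ys"
    using kmult_shift_right[OF N ys] by (simp add: tens_def)
  finally show ?thesis .
qed



lemma ptrace_except_cong:
  assumes "\<And>xs ys. xs \<in> slices d N \<Longrightarrow> ys \<in> slices d N \<Longrightarrow> M xs ys = M' xs ys" "b < d"
  shows "ptrace_except d N t M a b = ptrace_except d N t M' a b"
  unfolding ptrace_except_def using assms slices_update by (intro sum.cong) auto

lemma trace_ptrace:
  assumes "t < N"
  shows "(\<Sum>a<d. ptrace_except d N t M a a) = (\<Sum>xs\<in>slices d N. M xs xs)"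
proof -
  have "(\<Sum>a<d. ptrace_except d N t M a a) = (\<Sum>a<d. \<Sum>xs\<in>{xs \<in> slices d N. xs ! t = a}. M xs xs)"
    unfolding ptrace_except_def by (intro sum.cong refl) auto
  also have "\<dots> = (\<Sum>xs\<in>slices d N. M xs xs)"
    by (rule sum.group) (use assms slices_nth in \<open>auto simp: finite_slices\<close>)
  finally show ?thesis .
qed

lemma agree_sum:
  fixes F :: "nat list \<Rightarrow> complex"
  assumes zs: "zs \<in> slices d N" and t: "t < N"
  shows "(\<Sum>ws\<in>slices d N. (if \<forall>s<N. s \<noteq> t \<longrightarrow> ws ! s = zs ! s then F ws else 0))
       = (\<Sum>b'<d. F (zs[t := b']))"
proof -
  have lz: "length zs = N" using zs slices_length by auto
  have img: "(\<lambda>b'. zs[t := b']) ` {..<d} = {ws \<in> slices d N. \<forall>s<N. s \<noteq> t \<longrightarrow> ws ! s = zs ! s}"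
  proof (intro equalityI subsetI)
    fix ws assume "ws \<in> (\<lambda>b'. zs[t := b']) ` {..<d}"
    then show "ws \<in> {ws \<in> slices d N. \<forall>s<N. s \<noteq> t \<longrightarrow> ws ! s = zs ! s}"
      using slices_update[OF zs] by auto
  next
    fix ws assume ws: "ws \<in> {ws \<in> slices d N. \<forall>s<N. s \<noteq> t \<longrightarrow> ws ! s = zs ! s}"
    then have lw: "length ws = N" using slices_length by auto
    have "ws = zs[t := ws ! t]"
    proof (rule nth_equalityI)
      show "length ws = length (zs[t := ws ! t])" using lw lz by simp
      fix i assume "i < length ws"
      then show "ws ! i = zs[t := ws ! t] ! i" using ws lw lz by (cases "i = t") auto
    qed
    moreover have "ws ! t < d" using ws t slices_nth by auto
    ultimately show "ws \<in> (\<lambda>b'. zs[t := b']) ` {..<d}" by blast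
  qed
  have inj: "inj_on (\<lambda>b'. zs[t := b']) {..<d}"
    by (rule inj_onI) (metis lz t nth_list_update_eq)
  have "(\<Sum>ws\<in>slices d N. (if \<forall>s<N. s \<noteq> t \<longrightarrow> ws ! s = zs ! s then F ws else 0))
      = (\<Sum>ws\<in>{ws \<in> slices d N. \<forall>s<N. s \<noteq> t \<longrightarrow> ws ! s = zs ! s}. F ws)"
    by (simp add: sum.inter_filter finite_slices)
  also have "\<dots> = (\<Sum>b'<d. F (zs[t := b']))"
    unfolding img[symmetric] by (subst sum.reindex[OF inj]) simp
  finally show ?thesis .
qed

lemma inner_lemma:
  fixes \<alpha> \<beta> :: "nat \<Rightarrow> nat kernel"
  assumes t: "t < N" and a: "a < d"
    and zs: "zs \<in> slices d N" and ws: "ws \<in> slices d N"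
    and hba: "\<And>s w z. s < N \<Longrightarrow> s \<noteq> t \<Longrightarrow> w < d \<Longrightarrow> z < d \<Longrightarrow> kmult {..<d} (\<beta> s) (\<alpha> s) w z = kid w z"
  shows "(\<Sum>xs\<in>{xs \<in> slices d N. xs ! t = a}. tens N \<alpha> xs zs * tens N \<beta> ws (xs[t := b]))
       = \<alpha> t a (zs!t) * \<beta> t (ws!t) b * (if \<forall>s<N. s \<noteq> t \<longrightarrow> ws ! s = zs ! s then 1 else 0)"
proof -
  define g where "g s c = (if s = t then (if c = a then \<alpha> t c (zs!t) * \<beta> t (ws!t) b else 0)
                            else \<alpha> s c (zs!s) * \<beta> s (ws!s) c)" for s c
  have fin: "finite {..<N}" by simp
  have pt: "(\<Prod>s<N. f s) = f t * (\<Prod>s\<in>{..<N} - {t}. f s)" for f :: "nat \<Rightarrow> complex"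
    using t by (subst prod.remove[of _ t]) auto
  have "(\<Sum>xs\<in>{xs \<in> slices d N. xs ! t = a}. tens N \<alpha> xs zs * tens N \<beta> ws (xs[t := b]))
      = (\<Sum>xs\<in>slices d N. \<Prod>s<N. g s (xs!s))"
  proof -
    have "(\<Sum>xs\<in>{xs \<in> slices d N. xs ! t = a}. tens N \<alpha> xs zs * tens N \<beta> ws (xs[t := b]))
        = (\<Sum>xs\<in>slices d N. if xs ! t = a then tens N \<alpha> xs zs * tens N \<beta> ws (xs[t := b]) else 0)"
      by (simp add: sum.inter_filter finite_slices)
    also have "\<dots> = (\<Sum>xs\<in>slices d N. \<Prod>s<N. g s (xs!s))"
    proof (intro sum.cong refl)
      fix xs assume xs: "xs \<in> slices d N"
      then have lx: "length xs = N" using slices_length by auto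
      have e1: "tens N \<alpha> xs zs * tens N \<beta> ws (xs[t := b])
          = (\<alpha> t (xs!t) (zs!t) * \<beta> t (ws!t) b) * (\<Prod>s\<in>{..<N} - {t}. \<alpha> s (xs!s) (zs!s) * \<beta> s (ws!s) (xs!s))"
        unfolding tens_def pt[of "\<lambda>s. \<alpha> s (xs!s) (zs!s)"] pt[of "\<lambda>s. \<beta> s (ws!s) (xs[t := b] ! s)"]
        using lx t by (simp add: prod.distrib mult_ac nth_list_update)
      have e2: "(\<Prod>s<N. g s (xs!s)) = g t (xs!t) * (\<Prod>s\<in>{..<N} - {t}. \<alpha> s (xs!s) (zs!s) * \<beta> s (ws!s) (xs!s))"
        unfolding pt[of "\<lambda>s. g s (xs!s)"] by (intro arg_cong2[where f = "(*)"] refl prod.cong) (auto simp: g_def)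
      show "(if xs ! t = a then tens N \<alpha> xs zs * tens N \<beta> ws (xs[t := b]) else 0) = (\<Prod>s<N. g s (xs!s))"
        unfolding e1 e2 by (simp add: g_def)
    qed
    finally show ?thesis .
  qed
  also have "\<dots> = (\<Prod>s<N. \<Sum>c<d. g s c)" by (rule sum_slices_prod)
  also have "\<dots> = (\<Sum>c<d. g t c) * (\<Prod>s\<in>{..<N} - {t}. \<Sum>c<d. g s c)" by (rule pt)
  also have "(\<Sum>c<d. g t c) = \<alpha> t a (zs!t) * \<beta> t (ws!t) b"
    using a by (simp add: g_def)
  also have "(\<Prod>s\<in>{..<N} - {t}. \<Sum>c<d. g s c) = (\<Prod>s\<in>{..<N} - {t}. if ws ! s = zs ! s then 1 else 0)"
  proof (intro prod.cong refl)
    fix s assume s: "s \<in> {..<N} - {t}"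
    have "(\<Sum>c<d. g s c) = kmult {..<d} (\<beta> s) (\<alpha> s) (ws!s) (zs!s)"
      using s by (simp add: g_def kmult_def mult.commute)
    also have "\<dots> = kid (ws!s) (zs!s)" using s zs ws slices_nth hba by auto
    finally show "(\<Sum>c<d. g s c) = (if ws ! s = zs ! s then 1 else 0)" by (simp add: kid_def)
  qed
  also have "\<dots> = (if \<forall>s<N. s \<noteq> t \<longrightarrow> ws ! s = zs ! s then 1 else 0)"
    by (subst prod01) auto
  finally show ?thesis .
qed

lemma ptc:
  fixes \<alpha> \<beta> :: "nat \<Rightarrow> nat kernel" and Y :: "nat list kernel"
  assumes t: "t < N" and a: "a < d" and b: "b < d"
    and hba: "\<And>s w z. s < N \<Longrightarrow> s \<noteq> t \<Longrightarrow> w < d \<Longrightarrow> z < d \<Longrightarrow> kmult {..<d} (\<beta> s) (\<alpha> s) w z = kid w z"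
  shows "ptrace_except d N t (kmult (slices d N) (tens N \<alpha>) (kmult (slices d N) Y (tens N \<beta>))) a b
       = (\<Sum>a'<d. \<Sum>b'<d. \<alpha> t a a' * ptrace_except d N t Y a' b' * \<beta> t b' b)"
proof -
  let ?S = "slices d N"
  let ?Sa = "{xs \<in> slices d N. xs ! t = a}"
  have "ptrace_except d N t (kmult ?S (tens N \<alpha>) (kmult ?S Y (tens N \<beta>))) a b
      = (\<Sum>xs\<in>?Sa. \<Sum>zs\<in>?S. \<Sum>ws\<in>?S. Y zs ws * (tens N \<alpha> xs zs * tens N \<beta> ws (xs[t := b])))"
    unfolding ptrace_except_def kmult_def by (simp add: sum_distrib_left mult_ac)
  also have "\<dots> = (\<Sum>zs\<in>?S. \<Sum>xs\<in>?Sa. \<Sum>ws\<in>?S. Y zs ws * (tens N \<alpha> xs zs * tens N \<beta> ws (xs[t := b])))"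
    by (rule sum.swap)
  also have "\<dots> = (\<Sum>zs\<in>?S. \<Sum>ws\<in>?S. \<Sum>xs\<in>?Sa. Y zs ws * (tens N \<alpha> xs zs * tens N \<beta> ws (xs[t := b])))"
    by (rule sum.cong[OF refl]) (rule sum.swap)
  also have "\<dots> = (\<Sum>zs\<in>?S. \<Sum>ws\<in>?S. Y zs ws * (\<alpha> t a (zs!t) * \<beta> t (ws!t) b * (if \<forall>s<N. s \<noteq> t \<longrightarrow> ws ! s = zs ! s then 1 else 0)))"
    by (intro sum.cong refl) (simp add: sum_distrib_left[symmetric] inner_lemma[OF t a _ _ hba])
  also have "\<dots> = (\<Sum>zs\<in>?S. \<Sum>ws\<in>?S. if \<forall>s<N. s \<noteq> t \<longrightarrow> ws ! s = zs ! s then Y zs ws * \<alpha> t a (zs!t) * \<beta> t (ws!t) b else 0)"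
    by (intro sum.cong refl) (auto simp: mult_ac)
  also have "\<dots> = (\<Sum>zs\<in>?S. \<Sum>b'<d. Y zs (zs[t := b']) * \<alpha> t a (zs!t) * \<beta> t (zs[t := b'] ! t) b)"
    by (intro sum.cong refl agree_sum t)
  also have "\<dots> = (\<Sum>zs\<in>?S. \<Sum>b'<d. \<alpha> t a (zs!t) * Y zs (zs[t := b']) * \<beta> t b' b)"
    using t by (intro sum.cong refl) (auto simp: slices_length mult_ac)
  also have "\<dots> = (\<Sum>a'<d. \<Sum>zs\<in>{xs \<in> ?S. xs ! t = a'}. \<Sum>b'<d. \<alpha> t a (zs!t) * Y zs (zs[t := b']) * \<beta> t b' b)"
    by (rule sum.group[symmetric]) (use t slices_nth in \<open>auto simp: finite_slices\<close>)
  also have "\<dots> = (\<Sum>a'<d. \<Sum>b'<d. \<Sum>zs\<in>{xs \<in> ?S. xs ! t = a'}. \<alpha> t a a' * Y zs (zs[t := b']) * \<beta> t b' b)"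
    by (intro sum.cong refl) (subst sum.swap, intro sum.cong refl, auto)
  also have "\<dots> = (\<Sum>a'<d. \<Sum>b'<d. \<alpha> t a a' * ptrace_except d N t Y a' b' * \<beta> t b' b)"
    unfolding ptrace_except_def by (simp add: sum_distrib_left sum_distrib_right)
  finally show ?thesis .
qed

lemma chain_lemma:
  assumes lz: "length zs = N" and t: "t < N" and zt: "zs ! t = a'"
    and c: "\<And>s. 0 < s \<Longrightarrow> s < N \<Longrightarrow> zs ! s = (if s - 1 = t then b' else zs ! (s - 1))"
  shows "zs = map (\<lambda>s. if s \<le> t then a' else b') [0..<N]"
proof -
  have p1: "zs ! (t - k) = a'" if "k \<le> t" for k
    using that
  proof (induction k)
    case 0 then show ?case using zt by simp
  next
    case (Suc k)
    have "0 < t - k" "t - k < N" using Suc.prems t by auto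
    from c[OF this] have h: "zs ! (t - k) = zs ! (t - k - 1)" using Suc.prems by auto
    have ih: "zs ! (t - k) = a'" using Suc.IH Suc.prems by simp
    have e: "t - k - 1 = t - Suc k" by simp
    show ?case using h ih e by metis
  qed
  have p2: "zs ! (Suc t + k) = b'" if "Suc t + k < N" for k
    using that
  proof (induction k)
    case 0 then show ?case using c[of "Suc t"] by simp
  next
    case (Suc k)
    then show ?case using c[of "Suc t + Suc k"] by simp
  qed
  show ?thesis
  proof (rule nth_equalityI)
    show "length zs = length (map (\<lambda>s. if s \<le> t then a' else b') [0..<N])" using lz by simp
    fix s assume "s < length zs"
    then have s: "s < N" using lz by simp
    show "zs ! s = map (\<lambda>s. if s \<le> t then a' else b') [0..<N] ! s"
    proof (cases "s \<le> t")
      case True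
      then show ?thesis using p1[of "t - s"] s by simp
    next
      case False
      then show ?thesis using p2[of "s - Suc t"] s by simp
    qed
  qed
qed

lemma ptrace_rhoC:
  fixes \<rho> :: "nat kernel"
  assumes N: "N \<ge> 1" and t: "t < N" and a: "a' < d" and b: "b' < d"
  shows "ptrace_except d N t (kmult (slices d N) (site_op N 0 \<rho>) shiftC) a' b' = \<rho> a' b'"
proof -
  let ?S = "slices d N"
  define z0 where "z0 = map (\<lambda>s. if s \<le> t then a' else b') [0..<N]"
  have z0S: "z0 \<in> {xs \<in> ?S. xs ! t = a'}"
    using a b t by (auto simp: z0_def slices_def)
  have key: "kmult ?S (site_op N 0 \<rho>) shiftC zs (zs[t := b']) = (if zs = z0 then \<rho> a' b' else 0)"
    if zs: "zs \<in> {xs \<in> ?S. xs ! t = a'}" for zs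
  proof -
    have zsS: "zs \<in> ?S" and zt: "zs ! t = a'" using zs by auto
    have lz: "length zs = N" using zsS slices_length by auto
    let ?ws = "zs[t := b']"
    have wsS: "?ws \<in> ?S" using slices_update[OF zsS b] .
    have lw: "length ?ws = N" using lz by simp
    have ll: "(last ?ws # butlast ?ws) ! s = ?ws ! ((s + N - 1) mod N)" if "s < N" for s
      using lbl_nth[OF lw that] .
    have m: "(s + N - 1) mod N = s - 1" if "0 < s" "s < N" for s
      using that by (simp add: mod_if)
    have "kmult ?S (site_op N 0 \<rho>) shiftC zs ?ws = site_op N 0 \<rho> zs (last ?ws # butlast ?ws)"
      using kmult_shift_right[OF N wsS] .
    also have "\<dots> = \<rho> (zs ! 0) (?ws ! (N - 1)) *
        (if \<forall>s<N. s \<noteq> 0 \<longrightarrow> zs ! s = (if s - 1 = t then b' else zs ! (s - 1)) then 1 else 0)"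
    proof -
      have ll2: "(last ?ws # butlast ?ws) ! s = (if s - 1 = t then b' else zs ! (s - 1))"
        if "0 < s" "s < N" for s
      proof -
        have "(last ?ws # butlast ?ws) ! s = ?ws ! (s - 1)" using ll[OF that(2)] m[OF that] by simp
        then show ?thesis using that lz by (auto simp: nth_list_update)
      qed
      have "(\<forall>s<N. s \<noteq> 0 \<longrightarrow> zs ! s = (last ?ws # butlast ?ws) ! s)
          \<longleftrightarrow> (\<forall>s<N. s \<noteq> 0 \<longrightarrow> zs ! s = (if s - 1 = t then b' else zs ! (s - 1)))"
      proof (intro iffI allI impI)
        fix s assume A: "\<forall>s<N. s \<noteq> 0 \<longrightarrow> zs ! s = (last ?ws # butlast ?ws) ! s" "s < N" "s \<noteq> 0"
        then show "zs ! s = (if s - 1 = t then b' else zs ! (s - 1))" using ll2[of s] by auto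
      next
        fix s assume A: "\<forall>s<N. s \<noteq> 0 \<longrightarrow> zs ! s = (if s - 1 = t then b' else zs ! (s - 1))" "s < N" "s \<noteq> 0"
        then show "zs ! s = (last ?ws # butlast ?ws) ! s" using ll2[of s] by auto
      qed
      moreover have "(last ?ws # butlast ?ws) ! 0 = ?ws ! (N - 1)"
        using ll[of 0] N by simp
      ultimately show ?thesis by (simp add: site_op_def)
    qed
    also have "\<dots> = (if zs = z0 then \<rho> a' b' else 0)"
    proof (cases "zs = z0")
      case True
      have "zs ! 0 = a'" using True t by (simp add: z0_def)
      moreover have "?ws ! (N - 1) = b'"
        using True t N lz by (auto simp: z0_def nth_list_update)
      moreover have "\<forall>s<N. s \<noteq> 0 \<longrightarrow> zs ! s = (if s - 1 = t then b' else zs ! (s - 1))"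
        using True t by (auto simp: z0_def)
      ultimately show ?thesis using True by simp
    next
      case False
      have nc: "\<not> (\<forall>s<N. s \<noteq> 0 \<longrightarrow> zs ! s = (if s - 1 = t then b' else zs ! (s - 1)))"
      proof
        assume "\<forall>s<N. s \<noteq> 0 \<longrightarrow> zs ! s = (if s - 1 = t then b' else zs ! (s - 1))"
        then have "zs = z0" unfolding z0_def using chain_lemma[OF lz t zt] by auto
        then show False using False by simp
      qed
      show ?thesis using False by (simp only: if_not_P[OF nc] if_False mult_zero_right)
    qed
    finally show ?thesis .
  qed
  have "ptrace_except d N t (kmult ?S (site_op N 0 \<rho>) shiftC) a' b'
      = (\<Sum>zs\<in>{xs \<in> ?S. xs ! t = a'}. if zs = z0 then \<rho> a' b' else 0)"
    unfolding ptrace_except_def using key by (intro sum.cong) auto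
  also have "\<dots> = \<rho> a' b'" using z0S by (simp add: finite_slices)
  finally show ?thesis .
qed



lemma kmult_cong_left:
  assumes "\<And>z. z \<in> I \<Longrightarrow> A x z = A' x z"
  shows "kmult I A B x y = kmult I A' B x y"
  by (rule kmult_cong) (use assms in simp_all)

lemma kmult_cong_right:
  assumes "\<And>z. z \<in> I \<Longrightarrow> B z y = B' z y"
  shows "kmult I A B x y = kmult I A B' x y"
  by (rule kmult_cong) (use assms in simp_all)

lemma kapply_PhiPlus:
  assumes "finite J" "e \<in> J"
  shows "kapply (J \<times> J) (tensor_idE M) PhiPlus (x, e) = M x e"
proof -
  have "kapply (J \<times> J) (tensor_idE M) PhiPlus (x, e) = (\<Sum>q\<in>J \<times> J. if q = (e, e) then M x e else 0)"
    unfolding kapply_def by (intro sum.cong refl) (auto simp: tensor_idE_def kid_def PhiPlus_def split: if_splits)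
  also have "\<dots> = M x e" using assms by simp
  finally show ?thesis .
qed

lemma kapply_PhiPlus_adj:
  assumes "finite J" "e \<in> J"
  shows "kapply (J \<times> J) (kadj (tensor_idE M)) PhiPlus (x, e) = cnj (M e x)"
proof -
  have "kapply (J \<times> J) (kadj (tensor_idE M)) PhiPlus (x, e) = (\<Sum>q\<in>J \<times> J. if q = (e, e) then cnj (M e x) else 0)"
    unfolding kapply_def by (intro sum.cong refl) (auto simp: kadj_def tensor_idE_def kid_def PhiPlus_def split: if_splits)
  also have "\<dots> = cnj (M e x)" using assms by simp
  finally show ?thesis .
qed

lemma R_idem:
  fixes psi pb :: "'b \<Rightarrow> complex"
  assumes c: "vinner J pb psi \<noteq> 0"
  shows "kmult J (\<lambda>p q. psi p * cnj (pb q) / vinner J pb psi) (\<lambda>p q. psi p * cnj (pb q) / vinner J pb psi) p q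
       = psi p * cnj (pb q) / vinner J pb psi"
proof -
  let ?c = "vinner J pb psi"
  have "kmult J (\<lambda>p q. psi p * cnj (pb q) / ?c) (\<lambda>p q. psi p * cnj (pb q) / ?c) p q
      = (\<Sum>r\<in>J. (psi p * cnj (pb q) / (?c * ?c)) * (cnj (pb r) * psi r))"
    unfolding kmult_def by (intro sum.cong refl) (simp add: divide_inverse mult_ac)
  also have "\<dots> = (psi p * cnj (pb q) / (?c * ?c)) * ?c"
    by (simp only: sum_distrib_left[symmetric] vinner_def)
  also have "\<dots> = psi p * cnj (pb q) / ?c" using c by (simp add: field_simps)
  finally show ?thesis .
qed

lemma R_trace:
  fixes psi pb :: "'b \<Rightarrow> complex"
  assumes c: "vinner J pb psi \<noteq> 0"
  shows "ktrace J (\<lambda>p q. psi p * cnj (pb q) / vinner J pb psi) = 1"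
proof -
  have "ktrace J (\<lambda>p q. psi p * cnj (pb q) / vinner J pb psi) = vinner J pb psi / vinner J pb psi"
    unfolding ktrace_def vinner_def by (simp add: sum_divide_distrib[symmetric] mult.commute)
  then show ?thesis using c by simp
qed

locale qsys =
  fixes d N :: nat and \<epsilon> :: real and H :: "nat kernel" and P :: "nat list kernel" and \<rho> :: "nat kernel"
  assumes N1: "N \<ge> 1" and herm: "hermitian_on {..<d} H"
    and Pexp: "\<forall>xs\<in>slices d N. \<forall>ys\<in>slices d N.
           kexp (slices d N) (kscale (\<i> * of_real \<epsilon>) P) xs ys = shiftC xs ys"
begin

definition ex :: "complex \<Rightarrow> nat kernel" where "ex c = kexp {..<d} (kscale c H)"
definition v :: "nat \<Rightarrow> nat kernel" where "v = (\<lambda>s. ex (\<i> * of_real \<epsilon> * of_nat s))"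
definition va :: "nat \<Rightarrow> nat kernel" where "va = (\<lambda>s. ex (- \<i> * of_real \<epsilon> * of_nat s))"
definition cexp :: "nat \<Rightarrow> complex" where
  "cexp s = (if s = 0 then \<i> * of_real \<epsilon> * (of_nat N - 1) else - \<i> * of_real \<epsilon>)"

abbreviation "SS \<equiv> slices d N"
abbreviation "V \<equiv> Vop d N \<epsilon> H"
abbreviation "U \<equiv> eiStilde_half d N \<epsilon> H P"
abbreviation "E \<equiv> kexp (slices d N) (kscale (\<i> * of_real \<epsilon> / 2) P)"
abbreviation "R0 \<equiv> site_op N 0 \<rho>"
definition "Q0 = kmult SS (kadj V) (kmult SS shiftC V)"
definition "DC = kmult SS (tens N (\<lambda>s. ex (cexp s))) shiftC"

lemma ex_add: "a < d \<Longrightarrow> b < d \<Longrightarrow> kmult {..<d} (ex x) (ex y) a b = ex (x + y) a b"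
  unfolding ex_def by (rule kexp_add) auto

lemma ex_adj: "a < d \<Longrightarrow> b < d \<Longrightarrow> kadj (ex c) a b = ex (cnj c) a b"
  unfolding ex_def by (rule kexp_adj) (use herm in auto)

lemma ex_zero: "a < d \<Longrightarrow> ex 0 a b = kid a b"
  unfolding ex_def by (rule kexp_zero) auto

lemma V_tens: "xs \<in> SS \<Longrightarrow> ys \<in> SS \<Longrightarrow> V xs ys = tens N v xs ys"
  unfolding Vop_def v_def ex_def by (rule kprod_sites)

lemma Vadj_tens:
  assumes "xs \<in> SS" "ys \<in> SS"
  shows "kadj V xs ys = tens N va xs ys"
proof -
  have "kadj V xs ys = kadj (tens N v) xs ys"
    using V_tens assms by (simp add: kadj_def)
  also have "\<dots> = tens N (\<lambda>s. kadj (v s)) xs ys" by (simp add: kadj_tens)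
  also have "\<dots> = tens N va xs ys"
    by (rule tens_cong) (use assms in \<open>auto simp: v_def va_def ex_adj\<close>)
  finally show ?thesis .
qed

lemma vva: "a < d \<Longrightarrow> b < d \<Longrightarrow> kmult {..<d} (v s) (va s) a b = kid a b"
  unfolding v_def va_def by (simp add: ex_add ex_zero)

lemma VVadj:
  assumes "xs \<in> SS" "ys \<in> SS"
  shows "kmult SS V (kadj V) xs ys = kid xs ys"
proof -
  have "kmult SS V (kadj V) xs ys = kmult SS (tens N v) (tens N va) xs ys"
    by (rule kmult_cong) (use assms in \<open>auto simp: V_tens Vadj_tens\<close>)
  also have "\<dots> = tens N (\<lambda>s. kmult {..<d} (v s) (va s)) xs ys" by (rule kmult_tens)
  also have "\<dots> = tens N (\<lambda>_. kid) xs ys"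
    by (rule tens_cong) (use assms in \<open>auto simp: vva\<close>)
  also have "\<dots> = kid xs ys" using assms by (rule tens_kid)
  finally show ?thesis .
qed

lemma EE:
  assumes "xs \<in> SS" "ys \<in> SS"
  shows "kmult SS E E xs ys = shiftC xs ys"
proof -
  have "kmult SS E E xs ys = kexp SS (kscale (\<i> * of_real \<epsilon> / 2 + \<i> * of_real \<epsilon> / 2) P) xs ys"
    by (rule kexp_add) (use assms in \<open>auto simp: finite_slices\<close>)
  also have "\<i> * of_real \<epsilon> / 2 + \<i> * of_real \<epsilon> / 2 = \<i> * (of_real \<epsilon> :: complex)" by simp
  finally show ?thesis using Pexp assms by simp
qed

lemma UU:
  assumes xs: "xs \<in> SS" and ys: "ys \<in> SS"
  shows "kmult SS U U xs ys = Q0 xs ys"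
proof -
  have inner1: "kmult SS V (kmult SS (kadj V) (kmult SS E V)) zs w = kmult SS E V zs w"
    if zs: "zs \<in> SS" for zs w
  proof -
    have "kmult SS V (kmult SS (kadj V) (kmult SS E V)) zs w = kmult SS (kmult SS V (kadj V)) (kmult SS E V) zs w"
      by (simp add: kmult_assoc)
    also have "\<dots> = kmult SS kid (kmult SS E V) zs w"
      by (rule kmult_cong_left) (use zs in \<open>auto simp: VVadj\<close>)
    also have "\<dots> = kmult SS E V zs w" using zs by (simp add: kmult_kid_left finite_slices)
    finally show ?thesis .
  qed
  have inner2: "kmult SS E (kmult SS V (kmult SS (kadj V) (kmult SS E V))) z ys = kmult SS shiftC V z ys"
    if z: "z \<in> SS" for z
  proof -
    have "kmult SS E (kmult SS V (kmult SS (kadj V) (kmult SS E V))) z ys = kmult SS E (kmult SS E V) z ys"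
      by (rule kmult_cong_right) (auto simp: inner1)
    also have "\<dots> = kmult SS (kmult SS E E) V z ys" by (simp add: kmult_assoc)
    also have "\<dots> = kmult SS shiftC V z ys"
      by (rule kmult_cong_left) (use z in \<open>auto simp: EE\<close>)
    finally show ?thesis .
  qed
  have "kmult SS U U xs ys = kmult SS (kadj V) (kmult SS E (kmult SS V (kmult SS (kadj V) (kmult SS E V)))) xs ys"
    by (simp only: eiStilde_half_def kmult_assoc)
  also have "\<dots> = kmult SS (kadj V) (kmult SS shiftC V) xs ys"
    by (rule kmult_cong_right) (auto simp: inner2)
  finally show ?thesis by (simp add: Q0_def)
qed

lemma cexp_eq:
  assumes "s < N"
  shows "- \<i> * of_real \<epsilon> * of_nat s + \<i> * of_real \<epsilon> * of_nat ((s + N - 1) mod N) = cexp s"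
proof (cases s)
  case 0
  then have "(s + N - 1) mod N = N - 1" using N1 by simp
  then show ?thesis using 0 N1 by (simp add: cexp_def of_nat_diff algebra_simps)
next
  case (Suc u)
  then have "(s + N - 1) mod N = u" using assms by simp
  then show ?thesis using Suc by (simp add: cexp_def algebra_simps)
qed

lemma Q0_DC:
  assumes xs: "xs \<in> SS" and ys: "ys \<in> SS"
  shows "Q0 xs ys = DC xs ys"
proof -
  have "Q0 xs ys = kmult SS (kadj V) (kmult SS (tens N (\<lambda>s. v ((s + N - 1) mod N))) shiftC) xs ys"
    unfolding Q0_def
  proof (rule kmult_cong_right)
    fix z assume z: "z \<in> SS"
    have "kmult SS shiftC V z ys = kmult SS shiftC (tens N v) z ys"
      by (rule kmult_cong_right) (use ys in \<open>auto simp: V_tens\<close>)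
    also have "\<dots> = kmult SS (tens N (\<lambda>s. v ((s + N - 1) mod N))) shiftC z ys"
      by (rule shift_tens[OF N1 z ys])
    finally show "kmult SS shiftC V z ys = kmult SS (tens N (\<lambda>s. v ((s + N - 1) mod N))) shiftC z ys" .
  qed
  also have "\<dots> = kmult SS (kmult SS (kadj V) (tens N (\<lambda>s. v ((s + N - 1) mod N)))) shiftC xs ys"
    by (simp add: kmult_assoc)
  also have "\<dots> = kmult SS (tens N (\<lambda>s. ex (cexp s))) shiftC xs ys"
  proof (rule kmult_cong_left)
    fix z assume z: "z \<in> SS"
    have "kmult SS (kadj V) (tens N (\<lambda>s. v ((s + N - 1) mod N))) xs z
        = kmult SS (tens N va) (tens N (\<lambda>s. v ((s + N - 1) mod N))) xs z"
      by (rule kmult_cong_left) (use xs in \<open>auto simp: Vadj_tens\<close>)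
    also have "\<dots> = tens N (\<lambda>s. kmult {..<d} (va s) (v ((s + N - 1) mod N))) xs z"
      by (rule kmult_tens)
    also have "\<dots> = tens N (\<lambda>s. ex (cexp s)) xs z"
    proof (rule tens_cong[OF _ xs z])
      fix t a b assume t: "t < N" and a: "a < d" and b: "b < d"
      have "kmult {..<d} (va t) (v ((t + N - 1) mod N)) a b
          = ex (- \<i> * of_real \<epsilon> * of_nat t + \<i> * of_real \<epsilon> * of_nat ((t + N - 1) mod N)) a b"
        unfolding va_def v_def by (rule ex_add[OF a b])
      also have "\<dots> = ex (cexp t) a b" by (simp only: cexp_eq[OF t])
      finally show "kmult {..<d} (va t) (v ((t + N - 1) mod N)) a b = ex (cexp t) a b" .
    qed
    finally show "kmult SS (kadj V) (tens N (\<lambda>s. v ((s + N - 1) mod N))) xs z = tens N (\<lambda>s. ex (cexp s)) xs z" .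
  qed
  finally show ?thesis by (simp add: DC_def)
qed

lemma T_tens: "xs \<in> SS \<Longrightarrow> ys \<in> SS \<Longrightarrow>
   kprod SS (map (\<lambda>t. site_op N t (kexp {..<d} (kscale (- \<i> * of_real \<epsilon>) H))) [0..<N]) xs ys
   = tens N (\<lambda>_. ex (- \<i> * of_real \<epsilon>)) xs ys"
  unfolding ex_def by (rule kprod_sites)

lemma eiStilde_DC:
  assumes xs: "xs \<in> SS" and ys: "ys \<in> SS"
  shows "eiStilde d N \<epsilon> H xs ys = DC xs ys"
proof -
  let ?G = "site_op N 0 (ex (\<i> * of_real (\<epsilon> * real N)))"
  have "eiStilde d N \<epsilon> H xs ys = kmult SS ?G (kmult SS shiftC (tens N (\<lambda>_. ex (- \<i> * of_real \<epsilon>)))) xs ys"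
    unfolding eiStilde_def eiS_def
  proof (rule kmult_cong)
    fix z assume z: "z \<in> SS"
    show "site_op N 0 (kexp {..<d} (kscale (\<i> * complex_of_real (\<epsilon> * real N)) H)) xs z = ?G xs z"
      by (simp add: ex_def)
    show "kmult SS shiftC (kprod SS (map (\<lambda>t. site_op N t (kexp {..<d} (kscale (- \<i> * of_real \<epsilon>) H))) [0..<N])) z ys
        = kmult SS shiftC (tens N (\<lambda>_. ex (- \<i> * of_real \<epsilon>))) z ys"
      by (rule kmult_cong_right, rule T_tens) (use ys in auto)
  qed
  also have "\<dots> = kmult SS ?G (kmult SS (tens N (\<lambda>_. ex (- \<i> * of_real \<epsilon>))) shiftC) xs ys"
    by (rule kmult_cong_right) (auto intro: shift_tens[OF N1 _ ys])
  also have "\<dots> = kmult SS (kmult SS ?G (tens N (\<lambda>_. ex (- \<i> * of_real \<epsilon>)))) shiftC xs ys"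
    by (simp add: kmult_assoc)
  also have "\<dots> = kmult SS (tens N (\<lambda>s. ex (cexp s))) shiftC xs ys"
  proof (rule kmult_cong_left)
    fix z assume z: "z \<in> SS"
    have "kmult SS ?G (tens N (\<lambda>_. ex (- \<i> * of_real \<epsilon>))) xs z
        = kmult SS (tens N (\<lambda>s. if s = 0 then ex (\<i> * of_real (\<epsilon> * real N)) else kid)) (tens N (\<lambda>_. ex (- \<i> * of_real \<epsilon>))) xs z"
      by (rule kmult_cong_left, rule site_op_tens) (use N1 in auto)
    also have "\<dots> = tens N (\<lambda>s. kmult {..<d} (if s = 0 then ex (\<i> * of_real (\<epsilon> * real N)) else kid) (ex (- \<i> * of_real \<epsilon>))) xs z"
      by (rule kmult_tens)
    also have "\<dots> = tens N (\<lambda>s. ex (cexp s)) xs z"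
    proof (rule tens_cong[OF _ xs z])
      fix s a b assume s: "s < N" and a: "a < d" and b: "b < d"
      show "kmult {..<d} (if s = 0 then ex (\<i> * of_real (\<epsilon> * real N)) else kid) (ex (- \<i> * of_real \<epsilon>)) a b = ex (cexp s) a b"
      proof (cases "s = 0")
        case True
        have "\<i> * of_real (\<epsilon> * real N) + - \<i> * of_real \<epsilon> = cexp s"
          using True by (simp add: cexp_def algebra_simps)
        then show ?thesis using True a b by (simp add: ex_add)
      next
        case False
        then show ?thesis using a by (simp add: kmult_kid_left cexp_def)
      qed
    qed
    finally show "kmult SS ?G (tens N (\<lambda>_. ex (- \<i> * of_real \<epsilon>))) xs z = tens N (\<lambda>s. ex (cexp s)) xs z" .
  qed
  finally show ?thesis by (simp add: DC_def)
qed

lemma R0_comm: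
  assumes xs: "xs \<in> SS" and zs: "zs \<in> SS"
  shows "kmult SS R0 (kadj V) xs zs = kmult SS (kadj V) R0 xs zs"
proof -
  let ?r = "\<lambda>s. if s = 0 then \<rho> else kid"
  have "kmult SS R0 (kadj V) xs zs = kmult SS (tens N ?r) (tens N va) xs zs"
    by (rule kmult_cong) (use N1 xs zs in \<open>auto simp: site_op_tens Vadj_tens\<close>)
  also have "\<dots> = tens N (\<lambda>s. kmult {..<d} (?r s) (va s)) xs zs" by (rule kmult_tens)
  also have "\<dots> = tens N (\<lambda>s. kmult {..<d} (va s) (?r s)) xs zs"
  proof (rule tens_cong[OF _ xs zs])
    fix s a b assume s: "s < N" and a: "a < d" and b: "b < d"
    show "kmult {..<d} (?r s) (va s) a b = kmult {..<d} (va s) (?r s) a b"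
    proof (cases "s = 0")
      case True
      have "kmult {..<d} \<rho> (va s) a b = kmult {..<d} \<rho> kid a b"
        by (rule kmult_cong) (use True in \<open>auto simp: va_def ex_zero\<close>)
      also have "\<dots> = \<rho> a b" using b by (simp add: kmult_kid_right)
      also have "\<dots> = kmult {..<d} kid \<rho> a b" using a by (simp add: kmult_kid_left)
      also have "\<dots> = kmult {..<d} (va s) \<rho> a b"
        by (rule kmult_cong) (use True a in \<open>auto simp: va_def ex_zero\<close>)
      finally show ?thesis using True by simp
    next
      case False
      then show ?thesis using a b by (simp add: kmult_kid_left kmult_kid_right)
    qed
  qed
  also have "\<dots> = kmult SS (tens N va) (tens N ?r) xs zs" by (rule kmult_tens[symmetric])
  also have "\<dots> = kmult SS (kadj V) R0 xs zs"
    by (rule kmult_cong) (use N1 xs zs in \<open>auto simp: site_op_tens Vadj_tens\<close>)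
  finally show ?thesis .
qed

lemma X_form:
  assumes xs: "xs \<in> SS" and ys: "ys \<in> SS"
  shows "kmult SS R0 Q0 xs ys = kmult SS (tens N va) (kmult SS (kmult SS R0 shiftC) (tens N v)) xs ys"
proof -
  have "kmult SS R0 Q0 xs ys = kmult SS (kmult SS R0 (kadj V)) (kmult SS shiftC V) xs ys"
    by (simp add: Q0_def kmult_assoc)
  also have "\<dots> = kmult SS (kmult SS (kadj V) R0) (kmult SS shiftC V) xs ys"
    by (rule kmult_cong_left) (use xs in \<open>auto simp: R0_comm\<close>)
  also have "\<dots> = kmult SS (kadj V) (kmult SS (kmult SS R0 shiftC) V) xs ys"
    by (simp add: kmult_assoc)
  also have "\<dots> = kmult SS (tens N va) (kmult SS (kmult SS R0 shiftC) (tens N v)) xs ys"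
    by (rule kmult_cong) (use xs ys in \<open>auto simp: Vadj_tens V_tens intro!: kmult_cong_right\<close>)
  finally show ?thesis .
qed

lemma ptr_X:
  assumes t: "t < N" and a: "a < d" and b: "b < d"
  shows "ptrace_except d N t (kmult SS R0 Q0) a b
       = kmult {..<d} (kmult {..<d} (kexp {..<d} (kscale (- \<i> * of_real \<epsilon> * of_nat t) H)) \<rho>)
               (kexp {..<d} (kscale (\<i> * of_real \<epsilon> * of_nat t) H)) a b"
proof -
  have "ptrace_except d N t (kmult SS R0 Q0) a b
      = ptrace_except d N t (kmult SS (tens N va) (kmult SS (kmult SS R0 shiftC) (tens N v))) a b"
    by (rule ptrace_except_cong[OF _ b]) (rule X_form)
  also have "\<dots> = (\<Sum>a'<d. \<Sum>b'<d. va t a a' * ptrace_except d N t (kmult SS R0 shiftC) a' b' * v t b' b)"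
    by (rule ptc[OF t a b]) (simp add: vva)
  also have "\<dots> = (\<Sum>a'<d. \<Sum>b'<d. va t a a' * \<rho> a' b' * v t b' b)"
    by (intro sum.cong refl) (simp add: ptrace_rhoC[OF N1 t])
  also have "\<dots> = kmult {..<d} (kmult {..<d} (va t) \<rho>) (v t) a b"
    unfolding kmult_def by (subst sum.swap) (simp add: sum_distrib_right)
  finally show ?thesis by (simp add: va_def v_def ex_def)
qed

end



theorem theorem7:
  fixes d N :: nat and \<epsilon> :: real
    and H \<rho> :: "nat kernel" and P :: "nat list kernel"
  assumes "d \<ge> 1" and "N \<ge> 1" and "\<epsilon> > 0"
    and "hermitian_on {..<d} H"
    and "hermitian_on (slices d N) P"
    and "\<forall>xs\<in>slices d N. \<forall>ys\<in>slices d N.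
           kexp (slices d N) (kscale (\<i> * of_real \<epsilon>) P) xs ys = shiftC xs ys"
    and "psd_on {..<d} \<rho>"
    and "ktrace {..<d} \<rho> > 0"
  shows "vinner (slices d N \<times> slices d N) (Psibar d N \<epsilon> H P) (Psi d N \<epsilon> H P \<rho>) \<noteq> 0
    \<and> (\<forall>p\<in>slices d N \<times> slices d N. \<forall>q\<in>slices d N \<times> slices d N.
         kmult (slices d N \<times> slices d N) (Rop d N \<epsilon> H P \<rho>) (Rop d N \<epsilon> H P \<rho>) p q
           = Rop d N \<epsilon> H P \<rho> p q)
    \<and> ktrace (slices d N \<times> slices d N) (Rop d N \<epsilon> H P \<rho>) = 1
    \<and> (\<forall>xs\<in>slices d N. \<forall>ys\<in>slices d N.
         ptrace_E (slices d N) (Rop d N \<epsilon> H P \<rho>) xs ys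
           = kmult (slices d N) (site_op N 0 \<rho>) (eiStilde d N \<epsilon> H) xs ys / ktrace {..<d} \<rho>)
    \<and> (\<forall>t<N. \<forall>a<d. \<forall>b<d.
         ptrace_except d N t (ptrace_E (slices d N) (Rop d N \<epsilon> H P \<rho>)) a b
           = kmult {..<d}
               (kmult {..<d} (kexp {..<d} (kscale (- \<i> * of_real \<epsilon> * of_nat t) H)) \<rho>)
               (kexp {..<d} (kscale (\<i> * of_real \<epsilon> * of_nat t) H)) a b
             / ktrace {..<d} \<rho>)"
proof -
  interpret qsys d N \<epsilon> H P \<rho>
    by unfold_locales (use assms in auto)
  let ?S = "slices d N"
  let ?J = "slices d N \<times> slices d N"
  let ?U = "eiStilde_half d N \<epsilon> H P"
  let ?M = "kmult ?S (site_op N 0 \<rho>) ?U"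
  let ?c = "vinner ?J (Psibar d N \<epsilon> H P) (Psi d N \<epsilon> H P \<rho>)"
  define X where "X = kmult ?S (site_op N 0 \<rho>) Q0"
  have fS: "finite ?S" by (rule finite_slices)
  have Psi_eq: "Psi d N \<epsilon> H P \<rho> (x, e) = ?M x e" if "e \<in> ?S" for x e
    unfolding Psi_def by (rule kapply_PhiPlus[OF fS that])
  have Psibar_eq: "Psibar d N \<epsilon> H P (x, e) = cnj (?U e x)" if "e \<in> ?S" for x e
    unfolding Psibar_def by (rule kapply_PhiPlus_adj[OF fS that])
  have MU: "kmult ?S ?M ?U x y = X x y" if "x \<in> ?S" "y \<in> ?S" for x y
  proof -
    have "kmult ?S ?M ?U x y = kmult ?S (site_op N 0 \<rho>) (kmult ?S ?U ?U) x y"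
      by (simp add: kmult_assoc)
    also have "\<dots> = X x y"
      unfolding X_def by (rule kmult_cong_right) (use that in \<open>auto simp: UU\<close>)
    finally show ?thesis .
  qed
  have c_eq: "?c = (\<Sum>x\<in>?S. X x x)"
  proof -
    have "?c = (\<Sum>p\<in>?J. ?U (snd p) (fst p) * ?M (fst p) (snd p))"
      unfolding vinner_def by (intro sum.cong refl) (auto simp: Psi_eq Psibar_eq)
    also have "\<dots> = (\<Sum>x\<in>?S. \<Sum>e\<in>?S. ?M x e * ?U e x)"
      by (simp add: sum.cartesian_product case_prod_beta mult.commute)
    also have "\<dots> = (\<Sum>x\<in>?S. X x x)"
      by (intro sum.cong refl) (simp add: MU[symmetric] kmult_def)
    finally show ?thesis .
  qed
  have N0: "0 < N" using assms by simp
  have trX: "(\<Sum>x\<in>?S. X x x) = ktrace {..<d} \<rho>"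
  proof -
    have "(\<Sum>x\<in>?S. X x x) = (\<Sum>a<d. ptrace_except d N 0 X a a)"
      by (rule trace_ptrace[symmetric, OF N0])
    also have "\<dots> = (\<Sum>a<d. \<rho> a a)"
    proof (intro sum.cong refl)
      fix a assume "a \<in> {..<d}"
      then have a: "a < d" by simp
      have "ptrace_except d N 0 X a a
          = kmult {..<d} (kmult {..<d} (kexp {..<d} (kscale (- \<i> * of_real \<epsilon> * of_nat 0) H)) \<rho>)
               (kexp {..<d} (kscale (\<i> * of_real \<epsilon> * of_nat 0) H)) a a"
        unfolding X_def by (rule ptr_X[OF N0 a a])
      also have "\<dots> = kmult {..<d} (kmult {..<d} kid \<rho>) kid a a"
      proof (rule kmult_cong)
        fix z assume z: "z \<in> {..<d}"
        show "kmult {..<d} (kexp {..<d} (kscale (- \<i> * of_real \<epsilon> * of_nat 0) H)) \<rho> a z = kmult {..<d} kid \<rho> a z"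
          by (rule kmult_cong_left) (use a in \<open>simp add: kexp_zero\<close>)
        show "kexp {..<d} (kscale (\<i> * of_real \<epsilon> * of_nat 0) H) z a = kid z a"
          using z by (simp add: kexp_zero)
      qed
      also have "\<dots> = \<rho> a a" using a by (simp add: kmult_kid_left kmult_kid_right)
      finally show "ptrace_except d N 0 X a a = \<rho> a a" .
    qed
    finally show ?thesis by (simp add: ktrace_def)
  qed
  have c_tr: "?c = ktrace {..<d} \<rho>" using c_eq trX by simp
  have cnz: "?c \<noteq> 0" using c_tr assms(8) by auto
  have ptE: "ptrace_E ?S (Rop d N \<epsilon> H P \<rho>) xs ys = X xs ys / ?c" if xs: "xs \<in> ?S" and ys: "ys \<in> ?S" for xs ys
  proof -
    have "ptrace_E ?S (Rop d N \<epsilon> H P \<rho>) xs ys = (\<Sum>e\<in>?S. ?M xs e * ?U e ys / ?c)"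
      unfolding ptrace_E_def Rop_def by (intro sum.cong refl) (simp add: Psi_eq Psibar_eq)
    also have "\<dots> = kmult ?S ?M ?U xs ys / ?c"
      by (simp add: kmult_def sum_divide_distrib)
    finally show ?thesis using MU xs ys by simp
  qed
  have X_eiS: "X xs ys = kmult ?S (site_op N 0 \<rho>) (eiStilde d N \<epsilon> H) xs ys" if "xs \<in> ?S" "ys \<in> ?S" for xs ys
    unfolding X_def by (rule kmult_cong_right) (use that in \<open>auto simp: Q0_DC eiStilde_DC\<close>)
  show ?thesis
  proof (intro conjI ballI allI impI)
    show "?c \<noteq> 0" by (rule cnz)
  next
    fix p q assume "p \<in> ?J" "q \<in> ?J"
    show "kmult ?J (Rop d N \<epsilon> H P \<rho>) (Rop d N \<epsilon> H P \<rho>) p q = Rop d N \<epsilon> H P \<rho> p q"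
      unfolding Rop_def by (rule R_idem[OF cnz])
  next
    show "ktrace ?J (Rop d N \<epsilon> H P \<rho>) = 1"
      unfolding Rop_def by (rule R_trace[OF cnz])
  next
    fix xs ys assume xs: "xs \<in> ?S" and ys: "ys \<in> ?S"
    show "ptrace_E ?S (Rop d N \<epsilon> H P \<rho>) xs ys
        = kmult ?S (site_op N 0 \<rho>) (eiStilde d N \<epsilon> H) xs ys / ktrace {..<d} \<rho>"
      using ptE[OF xs ys] X_eiS[OF xs ys] c_tr by simp
  next
    fix t a b assume t: "t < N" and a: "a < d" and b: "b < d"
    have "ptrace_except d N t (ptrace_E ?S (Rop d N \<epsilon> H P \<rho>)) a b
        = ptrace_except d N t (\<lambda>xs ys. X xs ys / ?c) a b"
      by (rule ptrace_except_cong[OF _ b]) (rule ptE)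
    also have "\<dots> = ptrace_except d N t X a b / ?c"
      by (simp add: ptrace_except_def sum_divide_distrib)
    also have "\<dots> = kmult {..<d}
               (kmult {..<d} (kexp {..<d} (kscale (- \<i> * of_real \<epsilon> * of_nat t) H)) \<rho>)
               (kexp {..<d} (kscale (\<i> * of_real \<epsilon> * of_nat t) H)) a b / ktrace {..<d} \<rho>"
      unfolding X_def using ptr_X[OF t a b] c_tr by simp
    finally show "ptrace_except d N t (ptrace_E ?S (Rop d N \<epsilon> H P \<rho>)) a b
        = kmult {..<d}
               (kmult {..<d} (kexp {..<d} (kscale (- \<i> * of_real \<epsilon> * of_nat t) H)) \<rho>)
               (kexp {..<d} (kscale (\<i> * of_real \<epsilon> * of_nat t) H)) a b / ktrace {..<d} \<rho>" .
  qed
qed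


end
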